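(* Let $(\Omega,\mathbb{P})$ be a probability space and let $T\colon\Omega\to\Omega$ be an ergodic measure-preserving transformation. Let $m\ge 1$ be an integer and let $f_1,\dots,f_m\in L^1(\mathbb{P})$ be real-valued. For each integer $n\ge m$ and each $\omega\in\Omega$, let $A(n,\omega)$ be the $m\times n$ real matrix whose $(i,j)$ entry is $f_i(T^{j-1}\omega)$, for $1\le i\le m$, $1\le j\le n$. Then for $\mathbb{P}$-almost every $\omega\in\Omega$, $$\lim_{n\to\infty}\frac{1}{n^{\downarrow m}}\operatorname{per}A(n,\omega)=\prod_{i=1}^m\int f_i\,\mathrm{d}\mathbb{P}.$$
   Context: For an $m\times n$ real matrix $A=(a_{i,j})$ with $m\le n$, its permanent is $\operatorname{per}A=\sum_{\tau}a_{1,\tau(1)}\cdots a_{m,\tau(m)}$, where the sum ranges over all one-to-one functions $\tau\colon\{1,\dots,m\}\to\{1,\dots,n\}$. The falling power is $n^{\downarrow m}=n(n-1)\cdots(n-m+1)$, the number of such functions. *)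

theory Defs
  imports "HOL-Probability.Probability"
begin

definition measure_preserving :: "'a measure \<Rightarrow> ('a \<Rightarrow> 'a) \<Rightarrow> bool" where
  "measure_preserving M T \<longleftrightarrow> T \<in> M \<rightarrow>\<^sub>M M \<and> distr M M T = M"

definition ergodic :: "'a measure \<Rightarrow> ('a \<Rightarrow> 'a) \<Rightarrow> bool" where
  "ergodic M T \<longleftrightarrow> measure_preserving M T \<and>
     (\<forall>A \<in> sets M. T -` A \<inter> space M = A \<longrightarrow> measure M A = 0 \<or> measure M A = 1)"

definition falling_pow :: "nat \<Rightarrow> nat \<Rightarrow> nat" where
  "falling_pow n m = (\<Prod>k<m. n - k)"

definition per :: "nat \<Rightarrow> nat \<Rightarrow> (nat \<Rightarrow> nat \<Rightarrow> real) \<Rightarrow> real" where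
  "per m n A = (\<Sum>\<tau> \<in> {\<tau>. \<tau> \<in> {..<m} \<rightarrow>\<^sub>E {..<n} \<and> inj_on \<tau> {..<m}}. \<Prod>i<m. A i (\<tau> i))"

end

theory Submission
  imports Defs
begin



lemma funpow_measurable:
  assumes "T \<in> M \<rightarrow>\<^sub>M M" shows "(T ^^ j) \<in> M \<rightarrow>\<^sub>M M"
proof (induction j)
  case 0 then show ?case by simp
next
  case (Suc j) show ?case unfolding funpow.simps by (rule measurable_comp[OF Suc.IH assms])
qed

lemma mp_integrable:
  fixes u :: "'a \<Rightarrow> real"
  assumes "measure_preserving M T" "integrable M u"
  shows "integrable M (\<lambda>x. u (T x))" "integral\<^sup>L M (\<lambda>x. u (T x)) = integral\<^sup>L M u"
proof -
  have T: "T \<in> M \<rightarrow>\<^sub>M M" and D: "distr M M T = M" using assms(1) unfolding measure_preserving_def by auto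
  have um: "u \<in> borel_measurable M" using assms(2) by auto
  show "integrable M (\<lambda>x. u (T x))" using integrable_distr_eq[OF T um] D assms(2) by simp
  show "integral\<^sup>L M (\<lambda>x. u (T x)) = integral\<^sup>L M u" using integral_distr[OF T um] D by simp
qed

lemma mp_integrable_pow:
  fixes u :: "'a \<Rightarrow> real"
  assumes "measure_preserving M T" "integrable M u"
  shows "integrable M (\<lambda>x. u ((T^^j) x))"
proof (induction j)
  case 0 then show ?case using assms(2) by simp
next
  case (Suc j)
  have "(\<lambda>x. u ((T ^^ Suc j) x)) = (\<lambda>x. (\<lambda>y. u ((T^^j) y)) (T x))" by (simp add: funpow_swap1)
  with mp_integrable(1)[OF assms(1) Suc] show ?case by simp
qed




definition bsum :: "('a \<Rightarrow> 'a) \<Rightarrow> ('a \<Rightarrow> real) \<Rightarrow> nat \<Rightarrow> 'a \<Rightarrow> real" where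
  "bsum T h k x = (\<Sum>j<k. h ((T^^j) x))"

fun bmax :: "('a \<Rightarrow> 'a) \<Rightarrow> ('a \<Rightarrow> real) \<Rightarrow> nat \<Rightarrow> 'a \<Rightarrow> real" where
  "bmax T h 0 x = 0"
| "bmax T h (Suc N) x = max (bmax T h N x) (bsum T h (Suc N) x)"

lemma bsum_0[simp]: "bsum T h 0 x = 0" by (simp add: bsum_def)

lemma bsum_Suc: "bsum T h (Suc k) x = h x + bsum T h k (T x)"
  unfolding bsum_def sum.lessThan_Suc_shift funpow_Suc_right by simp

lemma bmax_ge: "k \<le> N \<Longrightarrow> bsum T h k x \<le> bmax T h N x"
proof (induction N)
  case 0 then show ?case by simp
next
  case (Suc N) then show ?case by (cases "k = Suc N") auto
qed

lemma bmax_nonneg: "0 \<le> bmax T h N x"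
  using bmax_ge[of 0 N T h x] by simp

lemma bmax_attained: "\<exists>k\<le>N. bmax T h N x = bsum T h k x"
proof (induction N)
  case 0 then show ?case by simp
next
  case (Suc N)
  then obtain k where k: "k \<le> N" "bmax T h N x = bsum T h k x" by auto
  show ?case
  proof (cases "bmax T h N x \<le> bsum T h (Suc N) x")
    case True then show ?thesis by (intro exI[of _ "Suc N"]) (simp add: max_def)
  next
    case False then show ?thesis using k by (intro exI[of _ k]) (simp add: max_def)
  qed
qed

lemma bmax_pos_iff: "0 < bmax T h N x \<longleftrightarrow> (\<exists>k\<le>N. 0 < bsum T h k x)"
  using bmax_attained[of N T h x] bmax_ge[of _ N T h x] by force

lemma bsum_measurable:
  assumes "T \<in> M \<rightarrow>\<^sub>M M" "h \<in> borel_measurable M"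
  shows "bsum T h k \<in> borel_measurable M"
proof -
  have "(\<lambda>x. h ((T^^j) x)) \<in> borel_measurable M" for j
    using measurable_comp[OF funpow_measurable[OF assms(1)] assms(2)] by (simp add: comp_def)
  then show ?thesis unfolding bsum_def[abs_def] by (intro borel_measurable_sum) auto
qed

lemma bsum_integrable:
  assumes "measure_preserving M T" "integrable M h"
  shows "integrable M (bsum T h k)"
  unfolding bsum_def[abs_def] using mp_integrable_pow[OF assms] by simp

lemma bmax_integrable:
  assumes "measure_preserving M T" "integrable M h"
  shows "integrable M (bmax T h N)"
proof (induction N)
  case 0 then show ?case by (simp add: bmax.simps(1)[abs_def])
next
  case (Suc N)
  have eq: "bmax T h (Suc N) = (\<lambda>x. max (bmax T h N x) (bsum T h (Suc N) x))" by (simp add: fun_eq_iff)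
  show ?case unfolding eq by (rule integrable_max[OF Suc bsum_integrable[OF assms]])
qed

lemma bmax_pt:
  assumes x: "x \<in> space M"
  shows "bmax T h N x - bmax T h N (T x) \<le> indicator {x\<in>space M. 0 < bmax T h N x} x * h x"
proof (cases "0 < bmax T h N x")
  case True
  obtain k where k: "k \<le> N" "bmax T h N x = bsum T h k x" using bmax_attained[of N T h x] by auto
  have "k \<noteq> 0" using True k by (metis bsum_0 less_irrefl)
  then obtain k' where k': "k = Suc k'" using not0_implies_Suc by blast
  have "bsum T h k' (T x) \<le> bmax T h N (T x)" using k k' by (intro bmax_ge) auto
  then have "bmax T h N x - bmax T h N (T x) \<le> h x" using k k' by (simp add: bsum_Suc)
  then show ?thesis using True x by simp
next
  case False
  then have "bmax T h N x = 0" using bmax_nonneg[of T h N x] by simp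
  then show ?thesis using False bmax_nonneg[of T h N "T x"] by simp
qed

lemma maximal_ineq:
  assumes mp: "measure_preserving M T" and h: "integrable M h"
  shows "0 \<le> (\<integral>x. indicator {x\<in>space M. \<exists>k. 0 < bsum T h k x} x * h x \<partial>M)"
proof -
  have T: "T \<in> M \<rightarrow>\<^sub>M M" using mp unfolding measure_preserving_def by auto
  have hm: "h \<in> borel_measurable M" using h by auto
  have bsm: "\<And>k. bsum T h k \<in> borel_measurable M" by (rule bsum_measurable[OF T hm])
  define A where "A N = {x\<in>space M. 0 < bmax T h N x}" for N
  define E where "E = {x\<in>space M. \<exists>k. 0 < bsum T h k x}"
  have bmm: "\<And>N. bmax T h N \<in> borel_measurable M" using bmax_integrable[OF mp h] by blast
  have AS: "A N \<in> sets M" for N unfolding A_def using bmm by measurable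
  have ES1: "{x\<in>space M. 0 < bsum T h k x} \<in> sets M" for k using bsm by measurable
  have EE: "E = (\<Union>k. {x\<in>space M. 0 < bsum T h k x})" unfolding E_def by blast
  have ES: "E \<in> sets M" unfolding EE by (rule sets.countable_UN, rule image_subsetI, rule ES1)
  have step1: "0 \<le> (\<integral>x. indicator (A N) x * h x \<partial>M)" for N
  proof -
    have i1: "integrable M (bmax T h N)" by (rule bmax_integrable[OF mp h])
    have i2: "integrable M (\<lambda>x. bmax T h N (T x))" by (rule mp_integrable(1)[OF mp i1])
    have i3: "integrable M (\<lambda>x. indicator (A N) x * h x)"
      using integrable_mult_indicator[OF AS h] by simp
    have "(\<integral>x. bmax T h N x - bmax T h N (T x) \<partial>M) = 0"
      using mp_integrable(2)[OF mp i1] by (simp add: Bochner_Integration.integral_diff[OF i1 i2])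
    moreover have "(\<integral>x. bmax T h N x - bmax T h N (T x) \<partial>M) \<le> (\<integral>x. indicator (A N) x * h x \<partial>M)"
    proof (rule Bochner_Integration.integral_mono[OF Bochner_Integration.integrable_diff[OF i1 i2] i3])
      fix x assume "x \<in> space M"
      then show "bmax T h N x - bmax T h N (T x) \<le> indicator (A N) x * h x"
        unfolding A_def by (rule bmax_pt)
    qed
    ultimately show ?thesis by simp
  qed
  have lim: "(\<lambda>N. (\<integral>x. indicator (A N) x * h x \<partial>M)) \<longlonglongrightarrow> (\<integral>x. indicator E x * h x \<partial>M)"
  proof (rule integral_dominated_convergence[where w="\<lambda>x. norm (h x)"])
    show "(\<lambda>x. indicator E x * h x) \<in> borel_measurable M" using ES hm by measurable
    show "(\<lambda>x. indicator (A N) x * h x) \<in> borel_measurable M" for N using AS hm by measurable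
    show "integrable M (\<lambda>x. norm (h x))" using h by blast
    show "AE x in M. norm (indicator (A N) x * h x) \<le> norm (h x)" for N
    proof (rule AE_I2)
      fix x show "norm (indicator (A N) x * h x) \<le> norm (h x)"
        by (cases "x \<in> A N") simp_all
    qed
    show "AE x in M. (\<lambda>N. indicator (A N) x * h x) \<longlonglongrightarrow> indicator E x * h x"
    proof (rule AE_I2)
      fix x assume x: "x \<in> space M"
      show "(\<lambda>N. indicator (A N) x * h x) \<longlonglongrightarrow> indicator E x * h x"
      proof (cases "x \<in> E")
        case True
        then obtain k where k: "0 < bsum T h k x" unfolding E_def by blast
        have "x \<in> A N" if "N \<ge> k" for N
          unfolding A_def using x k that bmax_pos_iff[of T h N x] by blast
        then have "eventually (\<lambda>N. indicator (A N) x * h x = indicator E x * h x) sequentially"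
          using True unfolding eventually_sequentially by (intro exI[of _ k]) simp
        then show ?thesis by (rule tendsto_eventually)
      next
        case False
        have "x \<notin> A N" for N using x False bmax_pos_iff[of T h N x] unfolding A_def E_def by blast
        then show ?thesis using False by simp
      qed
    qed
  qed
  have "0 \<le> (\<integral>x. indicator E x * h x \<partial>M)"
    by (rule LIMSEQ_le_const[OF lim]) (use step1 in blast)
  then show ?thesis by (simp add: E_def)
qed




lemma unb_iff: "(\<forall>r::nat. \<exists>k. real r < a k) \<longleftrightarrow> (\<forall>r::real. \<exists>k. r < a k)"
proof
  assume H: "\<forall>r::nat. \<exists>k. real r < a k"
  show "\<forall>r::real. \<exists>k. r < a k"
  proof
    fix r :: real
    obtain n where n: "r < real n" using reals_Archimedean2 by blast
    obtain k where "real n < a k" using H by blast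
    with n show "\<exists>k. r < a k" by (intro exI[of _ k]) simp
  qed
qed auto

lemma pow_invariant:
  assumes T: "T \<in> M \<rightarrow>\<^sub>M M" and inv: "T -` B \<inter> space M = B" and x: "x \<in> space M"
  shows "(T^^j) x \<in> B \<longleftrightarrow> x \<in> B"
proof (induction j)
  case 0 then show ?case by simp
next
  case (Suc j)
  have sp: "(T^^j) x \<in> space M" using measurable_space[OF funpow_measurable[OF T] x] .
  have "T ((T^^j) x) \<in> B \<longleftrightarrow> (T^^j) x \<in> B"
  proof -
    have "(T^^j) x \<in> B \<longleftrightarrow> (T^^j) x \<in> T -` B \<inter> space M" using inv by simp
    then show ?thesis using sp by simp
  qed
  then show ?case using Suc by simp
qed

lemma birkhoff_upper:
  assumes P: "prob_space M" and erg: "ergodic M T" and g: "integrable M g" and c: "integral\<^sup>L M g < c"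
  shows "AE x in M. \<exists>r. \<forall>k. bsum T g k x \<le> real k * c + r"
proof -
  interpret prob_space M by fact
  have mp: "measure_preserving M T" using erg unfolding ergodic_def by blast
  have T: "T \<in> M \<rightarrow>\<^sub>M M" using mp unfolding measure_preserving_def by blast
  define h where "h x = g x - c" for x
  have hi: "integrable M h" unfolding h_def[abs_def]
    by (intro Bochner_Integration.integrable_diff g) simp
  have hs: "bsum T h k x = bsum T g k x - real k * c" for k x
    unfolding bsum_def h_def by (simp add: sum_subtractf)
  have hm: "h \<in> borel_measurable M" using hi by blast
  have bsm: "\<And>k. bsum T h k \<in> borel_measurable M" by (rule bsum_measurable[OF T hm])
  define B where "B = {x\<in>space M. \<forall>r::nat. \<exists>k. real r < bsum T h k x}"
  have BS: "B \<in> sets M" unfolding B_def using bsm by measurable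
  have Bsp: "B \<subseteq> space M" unfolding B_def by blast
  have inv: "T -` B \<inter> space M = B"
  proof (intro equalityI subsetI)
    fix x assume "x \<in> T -` B \<inter> space M"
    then have x: "x \<in> space M" and Tx: "T x \<in> B" by auto
    have H: "\<forall>r::real. \<exists>k. r < bsum T h k (T x)" using Tx unfolding B_def unb_iff by blast
    have "\<forall>r::real. \<exists>k. r < bsum T h k x"
    proof
      fix r :: real
      obtain k where "r - h x < bsum T h k (T x)" using H by blast
      then have "r < bsum T h (Suc k) x" by (simp add: bsum_Suc)
      then show "\<exists>k. r < bsum T h k x" by blast
    qed
    then show "x \<in> B" using x unfolding B_def unb_iff by blast
  next
    fix x assume xB: "x \<in> B"
    then have x: "x \<in> space M" and H: "\<forall>r::real. \<exists>k. r < bsum T h k x"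
      unfolding B_def unb_iff by blast+
    have Tsp: "T x \<in> space M" using measurable_space[OF T x] .
    have "\<forall>r::real. \<exists>k. r < bsum T h k (T x)"
    proof
      fix r :: real
      obtain k where k: "max 0 (r + h x) < bsum T h k x" using H by blast
      have "k \<noteq> 0" using k by (metis bsum_0 max.cobounded1 not_le)
      then obtain k' where k': "k = Suc k'" using not0_implies_Suc by blast
      have "r < bsum T h k' (T x)" using k unfolding k' bsum_Suc by simp
      then show "\<exists>k. r < bsum T h k (T x)" by blast
    qed
    then have "T x \<in> B" using Tsp unfolding B_def unb_iff by blast
    then show "x \<in> T -` B \<inter> space M" using x by blast
  qed
  have hB: "bsum T (\<lambda>x. indicator B x * h x) k x = indicator B x * bsum T h k x" if xs: "x \<in> space M" for k x
    unfolding bsum_def sum_distrib_left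
    by (intro sum.cong refl) (simp add: indicator_def pow_invariant[OF T inv xs])
  have "measure M B \<noteq> 1"
  proof
    assume B1: "measure M B = 1"
    have hi': "integrable M (\<lambda>x. indicator B x * h x)"
      using integrable_mult_indicator[OF BS hi] by simp
    have EB: "{x\<in>space M. \<exists>k. 0 < bsum T (\<lambda>x. indicator B x * h x) k x} = B"
    proof (intro equalityI subsetI)
      fix x assume "x \<in> {x\<in>space M. \<exists>k. 0 < bsum T (\<lambda>x. indicator B x * h x) k x}"
      then obtain k where x: "x \<in> space M" and k: "0 < bsum T (\<lambda>x. indicator B x * h x) k x" by blast
      then have "0 < indicator B x * bsum T h k x" using hB[OF x] by simp
      then show "x \<in> B" by (cases "x \<in> B") simp_all
    next
      fix x assume xB: "x \<in> B"
      then have x: "x \<in> space M" using Bsp by blast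
      obtain k where "real 0 < bsum T h k x" using xB unfolding B_def by blast
      then have "0 < bsum T (\<lambda>x. indicator B x * h x) k x" using hB[OF x] xB by simp
      then show "x \<in> {x\<in>space M. \<exists>k. 0 < bsum T (\<lambda>x. indicator B x * h x) k x}" using x by blast
    qed
    have "0 \<le> (\<integral>x. indicator {x\<in>space M. \<exists>k. 0 < bsum T (\<lambda>x. indicator B x * h x) k x} x * (indicator B x * h x) \<partial>M)"
      by (rule maximal_ineq[OF mp hi'])
    also have "\<dots> = (\<integral>x. indicator B x * (indicator B x * h x) \<partial>M)" unfolding EB ..
    also have "\<dots> = (\<integral>x. h x \<partial>M)"
    proof (rule integral_cong_AE)
      show "(\<lambda>x. indicator B x * (indicator B x * h x)) \<in> borel_measurable M" using BS hm by measurable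
      show "h \<in> borel_measurable M" by fact
      have "AE x in M. x \<in> B" using prob_eq_1[OF BS] B1 by simp
      then show "AE x in M. indicator B x * (indicator B x * h x) = h x"
        by eventually_elim simp
    qed
    also have "\<dots> = integral\<^sup>L M g - c" unfolding h_def
      by (subst Bochner_Integration.integral_diff[OF g]) (simp_all add: prob_space)
    finally show False using c by simp
  qed
  then have "measure M B = 0" using erg BS inv unfolding ergodic_def by blast
  then have ae: "AE x in M. x \<notin> B" using prob_eq_0[OF BS] by simp
  have *: "\<exists>r. \<forall>k. bsum T g k x \<le> real k * c + r" if "x \<notin> B" "x \<in> space M" for x
  proof -
    from that have "\<not> (\<forall>r::nat. \<exists>k. real r < bsum T h k x)" unfolding B_def by blast
    then obtain r :: nat where "\<forall>k. \<not> real r < bsum T h k x" by blast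
    then have "\<forall>k. bsum T h k x \<le> real r" by (simp add: not_less)
    then show ?thesis using hs by (intro exI[of _ "real r"]) (simp add: algebra_simps)
  qed
  show ?thesis using ae AE_space by eventually_elim (use * in blast)
qed




lemma conv_from_bounds:
  fixes S :: "nat \<Rightarrow> real"
  assumes H: "\<forall>j::nat. \<exists>r. \<forall>k. \<bar>S k - real k * I\<bar> \<le> real k / real (Suc j) + r"
  shows "(\<lambda>n. S n / real n) \<longlonglongrightarrow> I"
proof (rule LIMSEQ_I)
  fix e :: real assume e: "0 < e"
  obtain j where j: "inverse (real (Suc j)) < e / 2" using reals_Archimedean[of "e/2"] e by auto
  obtain r where r: "\<forall>k. \<bar>S k - real k * I\<bar> \<le> real k / real (Suc j) + r" using H by blast
  have r0: "0 \<le> r" using r[rule_format, of 0] by simp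
  obtain N where N: "2 * r / e < real N" using reals_Archimedean2 by blast
  show "\<exists>no. \<forall>n\<ge>no. norm (S n / real n - I) < e"
  proof (intro exI[of _ "Suc N"] allI impI)
    fix n assume n: "Suc N \<le> n"
    then have npos: "0 < real n" by simp
    have "r < real n * (e / 2)"
    proof -
      have "2 * r / e < real n" using N n by linarith
      then have "2 * r < real n * e" using e by (simp add: divide_less_eq)
      then show ?thesis by simp
    qed
    then have rn: "r / real n < e / 2" using npos by (simp add: divide_less_eq mult.commute)
    have "norm (S n / real n - I) = \<bar>S n - real n * I\<bar> / real n"
      using npos by (simp add: field_simps abs_divide)
    also have "\<dots> \<le> (real n / real (Suc j) + r) / real n"
      using r npos by (intro divide_right_mono) auto
    also have "\<dots> = inverse (real (Suc j)) + r / real n"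
      using npos by (simp add: field_simps)
    also have "\<dots> < e / 2 + e / 2" using j rn by linarith
    finally show "norm (S n / real n - I) < e" by simp
  qed
qed

lemma birkhoff:
  assumes P: "prob_space M" and erg: "ergodic M T" and g: "integrable M g"
  shows "AE x in M. (\<lambda>n. bsum T g n x / real n) \<longlonglongrightarrow> integral\<^sup>L M g"
proof -
  define I where "I = integral\<^sup>L M g"
  have up: "AE x in M. \<exists>r. \<forall>k. bsum T g k x \<le> real k * (I + 1 / real (Suc j)) + r" for j
    by (rule birkhoff_upper[OF P erg g]) (simp add: I_def)
  have gi: "integrable M (\<lambda>x. - g x)" using g by simp
  have neg: "bsum T (\<lambda>x. - g x) k x = - bsum T g k x" for k x
    unfolding bsum_def by (simp add: sum_negf)
  have lo: "AE x in M. \<exists>r. \<forall>k. - bsum T g k x \<le> real k * (- I + 1 / real (Suc j)) + r" for j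
    using birkhoff_upper[OF P erg gi, of "- I + 1 / real (Suc j)"] unfolding neg by (simp add: I_def)
  have "AE x in M. \<forall>j. (\<exists>r. \<forall>k. bsum T g k x \<le> real k * (I + 1 / real (Suc j)) + r) \<and>
      (\<exists>r. \<forall>k. - bsum T g k x \<le> real k * (- I + 1 / real (Suc j)) + r)"
    unfolding AE_all_countable using up lo by (auto intro: AE_conjI)
  then show ?thesis
  proof eventually_elim
    case (elim x)
    have "\<forall>j::nat. \<exists>r. \<forall>k. \<bar>bsum T g k x - real k * I\<bar> \<le> real k / real (Suc j) + r"
    proof
      fix j :: nat
      obtain r1 where r1: "\<forall>k. bsum T g k x \<le> real k * (I + 1 / real (Suc j)) + r1" using elim by blast
      obtain r2 where r2: "\<forall>k. - bsum T g k x \<le> real k * (- I + 1 / real (Suc j)) + r2" using elim by blast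
      have "\<bar>bsum T g k x - real k * I\<bar> \<le> real k / real (Suc j) + max r1 r2" for k
        using r1[rule_format, of k] r2[rule_format, of k] max.cobounded1[of r1 r2] max.cobounded2[of r1 r2]
        by (simp add: algebra_simps abs_le_iff) linarith
      then show "\<exists>r. \<forall>k. \<bar>bsum T g k x - real k * I\<bar> \<le> real k / real (Suc j) + r" by blast
    qed
    then show ?case unfolding I_def[symmetric] by (rule conv_from_bounds)
  qed
qed




definition injs :: "nat \<Rightarrow> nat \<Rightarrow> (nat \<Rightarrow> nat) set" where
  "injs m n = {\<tau>. \<tau> \<in> {..<m} \<rightarrow>\<^sub>E {..<n} \<and> inj_on \<tau> {..<m}}"

lemma per_injs: "per m n A = (\<Sum>\<tau>\<in>injs m n. \<Prod>i<m. A i (\<tau> i))"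
  unfolding per_def injs_def ..

lemma finite_injs: "finite (injs m n)"
proof (rule finite_subset)
  show "injs m n \<subseteq> {..<m} \<rightarrow>\<^sub>E {..<n}" unfolding injs_def by blast
  show "finite ({..<m} \<rightarrow>\<^sub>E {..<n})" by (intro finite_PiE) auto
qed

lemma injs_0: "injs 0 n = {\<lambda>x. undefined}"
  unfolding injs_def by auto

lemma per_0: "per 0 n A = 1"
  unfolding per_injs injs_0 by simp

lemma injs_Suc:
  "injs (Suc m) n = (\<lambda>(\<tau>, j). \<tau>(m := j)) ` (SIGMA \<tau>:injs m n. {..<n} - \<tau> ` {..<m})"
proof (intro equalityI subsetI)
  fix \<sigma> assume s: "\<sigma> \<in> injs (Suc m) n"
  define \<tau> where "\<tau> = \<sigma>(m := undefined)"
  have s': "\<sigma> \<in> {..<Suc m} \<rightarrow>\<^sub>E {..<n} \<and> inj_on \<sigma> {..<Suc m}" using s by (simp only: injs_def mem_Collect_eq)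
  have sP: "\<sigma> \<in> {..<Suc m} \<rightarrow>\<^sub>E {..<n}" using s' by (rule conjunct1)
  have si: "inj_on \<sigma> {..<Suc m}" using s' by (rule conjunct2)
  have tP: "\<tau> \<in> {..<m} \<rightarrow>\<^sub>E {..<n}"
  proof (rule PiE_I)
    fix i assume i: "i \<in> {..<m}"
    have "i \<in> {..<Suc m}" "i \<noteq> m" using i by simp_all
    then show "\<tau> i \<in> {..<n}" using PiE_mem[OF sP, of i] unfolding \<tau>_def by simp
  next
    fix i assume i: "i \<notin> {..<m}"
    show "\<tau> i = undefined"
    proof (cases "i = m")
      case False then have "i \<notin> {..<Suc m}" using i by auto
      then show ?thesis using PiE_arb[OF sP] False unfolding \<tau>_def by simp
    qed (simp add: \<tau>_def)
  qed
  have ti: "inj_on \<tau> {..<m}"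
  proof -
    have "inj_on \<sigma> {..<m}" using si by (rule inj_on_subset) auto
    moreover have "\<And>i. i \<in> {..<m} \<Longrightarrow> \<tau> i = \<sigma> i" unfolding \<tau>_def by simp
    ultimately show ?thesis using inj_on_cong by blast
  qed
  have jn: "\<sigma> m \<in> {..<n}" using sP by auto
  have jni: "\<sigma> m \<notin> \<tau> ` {..<m}"
  proof
    assume "\<sigma> m \<in> \<tau> ` {..<m}"
    then obtain i where i: "i < m" "\<sigma> m = \<tau> i" by auto
    then have "\<sigma> m = \<sigma> i" unfolding \<tau>_def by simp
    with si i show False unfolding inj_on_def by (metis lessThan_iff less_Suc_eq less_irrefl)
  qed
  have "\<sigma> = \<tau>(m := \<sigma> m)" unfolding \<tau>_def by simp
  moreover have "(\<tau>, \<sigma> m) \<in> (SIGMA \<tau>:injs m n. {..<n} - \<tau> ` {..<m})"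
    using tP ti jn jni unfolding injs_def by blast
  ultimately show "\<sigma> \<in> (\<lambda>(\<tau>, j). \<tau>(m := j)) ` (SIGMA \<tau>:injs m n. {..<n} - \<tau> ` {..<m})"
    by (intro image_eqI[where x="(\<tau>, \<sigma> m)"]) auto
next
  fix \<sigma> assume "\<sigma> \<in> (\<lambda>(\<tau>, j). \<tau>(m := j)) ` (SIGMA \<tau>:injs m n. {..<n} - \<tau> ` {..<m})"
  then obtain \<tau> j where s: "\<sigma> = \<tau>(m := j)" and t: "\<tau> \<in> injs m n" and j: "j < n" "j \<notin> \<tau> ` {..<m}" by auto
  have tP: "\<tau> \<in> {..<m} \<rightarrow>\<^sub>E {..<n}" and ti: "inj_on \<tau> {..<m}" using t unfolding injs_def by auto
  have "\<sigma> \<in> {..<Suc m} \<rightarrow>\<^sub>E {..<n}"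
  proof (rule PiE_I)
    fix i assume "i \<in> {..<Suc m}" then show "\<sigma> i \<in> {..<n}" using tP j unfolding s by (cases "i = m") auto
  next
    fix i assume "i \<notin> {..<Suc m}" then show "\<sigma> i = undefined" using PiE_arb[OF tP, of i] unfolding s by auto
  qed
  moreover have "inj_on \<sigma> {..<Suc m}"
  proof -
    have e: "{..<Suc m} = insert m {..<m}" by auto
    have "inj_on \<sigma> {..<m}" using ti unfolding s by (rule inj_on_cong[THEN iffD1, rotated]) auto
    moreover have "\<sigma> m \<notin> \<sigma> ` ({..<m} - {m})"
    proof -
      have "\<sigma> ` ({..<m} - {m}) = \<tau> ` {..<m}" unfolding s by (auto intro!: image_cong)
      then show ?thesis using j unfolding s by simp
    qed
    ultimately show ?thesis unfolding e by simp
  qed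
  ultimately show "\<sigma> \<in> injs (Suc m) n" unfolding injs_def by blast
qed

lemma inj_on_upd_Sigma:
  "inj_on (\<lambda>(\<tau>, j). \<tau>(m := j)) (SIGMA \<tau>:injs m n. {..<n} - \<tau> ` {..<m})"
proof (rule inj_onI, clarify)
  fix \<tau> j \<tau>' j'
  assume t: "\<tau> \<in> injs m n" and t': "\<tau>' \<in> injs m n" and eq: "\<tau>(m := j) = \<tau>'(m := j')"
  have j: "j = j'" using fun_cong[OF eq, of m] by simp
  have tm: "\<tau> m = undefined" "\<tau>' m = undefined"
    using PiE_arb[of \<tau> "{..<m}" "\<lambda>_. {..<n}" m] PiE_arb[of \<tau>' "{..<m}" "\<lambda>_. {..<n}" m] t t'
    unfolding injs_def by auto
  have "\<tau> = \<tau>'"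
  proof
    fix i show "\<tau> i = \<tau>' i" using fun_cong[OF eq, of i] tm by (cases "i = m") auto
  qed
  then show "\<tau> = \<tau>' \<and> j = j'" using j by simp
qed

lemma per_Suc:
  "per (Suc m) n A = (\<Sum>\<tau>\<in>injs m n. (\<Prod>i<m. A i (\<tau> i)) * (\<Sum>j\<in>{..<n} - \<tau> ` {..<m}. A m j))"
proof -
  have "per (Suc m) n A = (\<Sum>\<sigma>\<in>injs (Suc m) n. \<Prod>i<Suc m. A i (\<sigma> i))" by (rule per_injs)
  also have "\<dots> = (\<Sum>p\<in>(SIGMA \<tau>:injs m n. {..<n} - \<tau> ` {..<m}). \<Prod>i<Suc m. A i (((\<lambda>(\<tau>, j). \<tau>(m := j)) p) i))"
    unfolding injs_Suc by (rule sum.reindex[OF inj_on_upd_Sigma, unfolded comp_def])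
  also have "\<dots> = (\<Sum>(\<tau>, j)\<in>(SIGMA \<tau>:injs m n. {..<n} - \<tau> ` {..<m}). \<Prod>i<Suc m. A i ((\<tau>(m := j)) i))"
    by (rule sum.cong[OF refl]) (simp add: split_beta)
  also have "\<dots> = (\<Sum>\<tau>\<in>injs m n. \<Sum>j\<in>{..<n} - \<tau> ` {..<m}. \<Prod>i<Suc m. A i ((\<tau>(m := j)) i))"
    by (rule sum.Sigma[symmetric]) (simp_all add: finite_injs)
  also have "\<dots> = (\<Sum>\<tau>\<in>injs m n. \<Sum>j\<in>{..<n} - \<tau> ` {..<m}. (\<Prod>i<m. A i (\<tau> i)) * A m j)"
  proof (intro sum.cong refl)
    fix \<tau> j
    have "(\<Prod>i<m. A i ((\<tau>(m := j)) i)) = (\<Prod>i<m. A i (\<tau> i))" by (intro prod.cong) auto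
    then show "(\<Prod>i<Suc m. A i ((\<tau>(m := j)) i)) = (\<Prod>i<m. A i (\<tau> i)) * A m j" by simp
  qed
  also have "\<dots> = (\<Sum>\<tau>\<in>injs m n. (\<Prod>i<m. A i (\<tau> i)) * (\<Sum>j\<in>{..<n} - \<tau> ` {..<m}. A m j))"
    by (simp add: sum_distrib_left)
  finally show ?thesis .
qed

lemma injs_range: "\<tau> \<in> injs m n \<Longrightarrow> i < m \<Longrightarrow> \<tau> i < n"
  unfolding injs_def by auto

lemma per_abs_bound: "per m n (\<lambda>i j. \<bar>A i j\<bar>) \<le> (\<Prod>i<m. \<Sum>j<n. \<bar>A i j\<bar>)"
proof (induction m)
  case 0 then show ?case by (simp add: per_0)
next
  case (Suc m)
  have "per (Suc m) n (\<lambda>i j. \<bar>A i j\<bar>) = (\<Sum>\<tau>\<in>injs m n. (\<Prod>i<m. \<bar>A i (\<tau> i)\<bar>) * (\<Sum>j\<in>{..<n} - \<tau> ` {..<m}. \<bar>A m j\<bar>))"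
    by (rule per_Suc)
  also have "\<dots> \<le> (\<Sum>\<tau>\<in>injs m n. (\<Prod>i<m. \<bar>A i (\<tau> i)\<bar>) * (\<Sum>j<n. \<bar>A m j\<bar>))"
    by (intro sum_mono mult_left_mono sum_mono2) (auto intro: prod_nonneg)
  also have "\<dots> = per m n (\<lambda>i j. \<bar>A i j\<bar>) * (\<Sum>j<n. \<bar>A m j\<bar>)"
    by (simp add: per_injs sum_distrib_right)
  also have "\<dots> \<le> (\<Prod>i<m. \<Sum>j<n. \<bar>A i j\<bar>) * (\<Sum>j<n. \<bar>A m j\<bar>)"
    by (intro mult_right_mono Suc) (auto intro: sum_nonneg)
  finally show ?case by simp
qed

lemma per_step_err:
  assumes K: "\<And>j. j < n \<Longrightarrow> \<bar>A m j\<bar> \<le> K" and K0: "0 \<le> K"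
  shows "\<bar>per (Suc m) n A - per m n A * (\<Sum>j<n. A m j)\<bar> \<le> real m * K * per m n (\<lambda>i j. \<bar>A i j\<bar>)"
proof -
  define X where "X \<tau> = (\<Sum>j\<in>\<tau> ` {..<m}. A m j)" for \<tau>
  have rest: "(\<Sum>j\<in>{..<n} - \<tau> ` {..<m}. A m j) = (\<Sum>j<n. A m j) - X \<tau>" if t: "\<tau> \<in> injs m n" for \<tau>
    unfolding X_def using injs_range[OF t] by (intro sum_diff) auto
  have Xb: "\<bar>X \<tau>\<bar> \<le> real m * K" if t: "\<tau> \<in> injs m n" for \<tau>
  proof -
    have "\<bar>X \<tau>\<bar> \<le> (\<Sum>j\<in>\<tau> ` {..<m}. \<bar>A m j\<bar>)" unfolding X_def by (rule sum_abs)
    also have "\<dots> \<le> real (card (\<tau> ` {..<m})) * K"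
      using K injs_range[OF t] by (intro sum_bounded_above) auto
    also have "\<dots> \<le> real m * K"
      using card_image_le[of "{..<m}" \<tau>] K0 by (intro mult_right_mono) auto
    finally show ?thesis .
  qed
  have "per (Suc m) n A - per m n A * (\<Sum>j<n. A m j) = (\<Sum>\<tau>\<in>injs m n. (\<Prod>i<m. A i (\<tau> i)) * (\<Sum>j\<in>{..<n} - \<tau> ` {..<m}. A m j) - (\<Prod>i<m. A i (\<tau> i)) * (\<Sum>j<n. A m j))"
    by (simp only: per_Suc per_injs[of m n A] sum_distrib_right sum_subtractf)
  also have "\<dots> = (\<Sum>\<tau>\<in>injs m n. (\<Prod>i<m. A i (\<tau> i)) * (- X \<tau>))"
    by (intro sum.cong refl) (simp add: rest algebra_simps)
  finally have eq: "per (Suc m) n A - per m n A * (\<Sum>j<n. A m j) = (\<Sum>\<tau>\<in>injs m n. (\<Prod>i<m. A i (\<tau> i)) * (- X \<tau>))" .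
  have "\<bar>per (Suc m) n A - per m n A * (\<Sum>j<n. A m j)\<bar> \<le> (\<Sum>\<tau>\<in>injs m n. \<bar>(\<Prod>i<m. A i (\<tau> i)) * (- X \<tau>)\<bar>)"
    unfolding eq by (rule sum_abs)
  also have "\<dots> \<le> (\<Sum>\<tau>\<in>injs m n. (\<Prod>i<m. \<bar>A i (\<tau> i)\<bar>) * (real m * K))"
    by (intro sum_mono) (auto simp: abs_mult abs_prod intro!: mult_left_mono Xb prod_nonneg)
  also have "\<dots> = real m * K * per m n (\<lambda>i j. \<bar>A i j\<bar>)"
    by (simp add: per_injs sum_distrib_left mult.commute)
  finally show ?thesis .
qed




definition mxa :: "(nat \<Rightarrow> real) \<Rightarrow> nat \<Rightarrow> real" where
  "mxa x n = Max (insert 0 ((\<lambda>j. \<bar>x j\<bar>) ` {..<n}))"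

lemma mxa_ge: "j < n \<Longrightarrow> \<bar>x j\<bar> \<le> mxa x n"
  unfolding mxa_def by (rule Max_ge) auto

lemma mxa_nonneg: "0 \<le> mxa x n"
  unfolding mxa_def by (rule Max_ge) auto

lemma mxa_limit:
  assumes lim: "(\<lambda>n. x n / real (Suc n)) \<longlonglongrightarrow> 0"
  shows "(\<lambda>n. mxa x n / real n) \<longlonglongrightarrow> 0"
proof (rule LIMSEQ_I)
  fix e :: real assume e: "0 < e"
  obtain N where N: "\<forall>n\<ge>N. norm (x n / real (Suc n) - 0) < e" using LIMSEQ_D[OF lim e] by blast
  define C where "C = mxa x N"
  obtain N2 where N2: "C / e < real N2" using reals_Archimedean2 by blast
  show "\<exists>no. \<forall>n\<ge>no. norm (mxa x n / real n - 0) < e"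
  proof (intro exI[of _ "Suc (N + N2)"] allI impI)
    fix n assume n: "Suc (N + N2) \<le> n"
    then have npos: "0 < real n" by simp
    have en: "0 < e * real n" using e npos by simp
    have "mxa x n < e * real n"
      unfolding mxa_def
    proof (subst Max_less_iff, simp, simp, intro ballI)
      fix a assume "a \<in> insert 0 ((\<lambda>j. \<bar>x j\<bar>) ` {..<n})"
      then consider "a = 0" | j where "j < n" "a = \<bar>x j\<bar>" by auto
      then show "a < e * real n"
      proof cases
        case 1 then show ?thesis using en by simp
      next
        case (2 j)
        show ?thesis
        proof (cases "j < N")
          case True
          have "a \<le> C" unfolding C_def using 2 True mxa_ge by simp
          also have "C < e * real N2" using N2 e by (simp add: divide_less_eq mult.commute)
          also have "\<dots> \<le> e * real n" using n e by (intro mult_left_mono) auto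
          finally show ?thesis .
        next
          case False
          then have "\<bar>x j\<bar> / real (Suc j) < e" using N by (auto simp: abs_divide)
          then have "\<bar>x j\<bar> < e * real (Suc j)" by (simp add: divide_less_eq mult.commute)
          also have "\<dots> \<le> e * real n" using 2 e by (intro mult_left_mono) auto
          finally show ?thesis using 2 by simp
        qed
      qed
    qed
    then have "mxa x n / real n < e" using npos by (simp add: divide_less_eq)
    then show "norm (mxa x n / real n - 0) < e" using mxa_nonneg[of x n] by simp
  qed
qed

lemma per_limit:
  fixes A :: "nat \<Rightarrow> nat \<Rightarrow> real"
  shows "\<lbrakk>\<And>i. i < m \<Longrightarrow> (\<lambda>n. (\<Sum>j<n. A i j) / real n) \<longlonglongrightarrow> c i;
          \<And>i. i < m \<Longrightarrow> (\<lambda>n. (\<Sum>j<n. \<bar>A i j\<bar>) / real n) \<longlonglongrightarrow> d i;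
          \<And>i. i < m \<Longrightarrow> (\<lambda>n. mxa (A i) n / real n) \<longlonglongrightarrow> 0\<rbrakk> \<Longrightarrow>
         (\<lambda>n. per m n A / real n ^ m) \<longlonglongrightarrow> (\<Prod>i<m. c i)"
proof (induction m)
  case 0 then show ?case by (simp add: per_0)
next
  case (Suc m)
  have IH: "(\<lambda>n. per m n A / real n ^ m) \<longlonglongrightarrow> (\<Prod>i<m. c i)"
    using Suc.prems by (intro Suc.IH) auto
  define err where "err n = per (Suc m) n A - per m n A * (\<Sum>j<n. A m j)" for n
  have eq: "per (Suc m) n A / real n ^ Suc m =
      (per m n A / real n ^ m) * ((\<Sum>j<n. A m j) / real n) + err n / real n ^ Suc m" for n
  proof (cases "n = 0")
    case True then show ?thesis by simp
  next
    case False
    then have "real n \<noteq> 0" by simp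
    then show ?thesis unfolding err_def by (simp add: field_simps)
  qed
  have lim1: "(\<lambda>n. (per m n A / real n ^ m) * ((\<Sum>j<n. A m j) / real n)) \<longlonglongrightarrow> (\<Prod>i<m. c i) * c m"
    by (rule tendsto_mult[OF IH Suc.prems(1)]) simp
  define g where "g n = real m * (mxa (A m) n / real n) * (\<Prod>i<m. (\<Sum>j<n. \<bar>A i j\<bar>) / real n)" for n
  have glim: "g \<longlonglongrightarrow> real m * 0 * (\<Prod>i<m. d i)"
    unfolding g_def[abs_def]
    by (intro tendsto_mult tendsto_const Suc.prems(3) tendsto_prod Suc.prems(2)) auto
  have bound: "norm (err n / real n ^ Suc m) \<le> g n" for n
  proof -
    have "\<bar>err n\<bar> \<le> real m * mxa (A m) n * per m n (\<lambda>i j. \<bar>A i j\<bar>)"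
      unfolding err_def by (rule per_step_err) (auto intro: mxa_ge mxa_nonneg)
    also have "\<dots> \<le> real m * mxa (A m) n * (\<Prod>i<m. \<Sum>j<n. \<bar>A i j\<bar>)"
      by (rule mult_left_mono[OF per_abs_bound], rule mult_nonneg_nonneg[OF of_nat_0_le_iff mxa_nonneg])
    finally have b: "\<bar>err n\<bar> \<le> real m * mxa (A m) n * (\<Prod>i<m. \<Sum>j<n. \<bar>A i j\<bar>)" .
    have "norm (err n / real n ^ Suc m) = \<bar>err n\<bar> / real n ^ Suc m" by (simp add: abs_divide)
    also have "\<dots> \<le> real m * mxa (A m) n * (\<Prod>i<m. \<Sum>j<n. \<bar>A i j\<bar>) / real n ^ Suc m"
      by (intro divide_right_mono b) simp
    also have "\<dots> = g n"
      unfolding g_def prod_dividef by (simp add: field_simps)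
    finally show ?thesis .
  qed
  have lim2: "(\<lambda>n. err n / real n ^ Suc m) \<longlonglongrightarrow> 0"
    by (rule Lim_null_comparison[OF always_eventually]) (use bound glim in auto)
  have "(\<lambda>n. (per m n A / real n ^ m) * ((\<Sum>j<n. A m j) / real n) + err n / real n ^ Suc m)
      \<longlonglongrightarrow> (\<Prod>i<m. c i) * c m + 0"
    by (rule tendsto_add[OF lim1 lim2])
  then show ?case unfolding eq[symmetric] by simp
qed

lemma falling_ratio: "(\<lambda>n. real n ^ m / real (falling_pow n m)) \<longlonglongrightarrow> 1"
proof -
  have each: "(\<lambda>n. real (n - k) / real n) \<longlonglongrightarrow> 1" for k
  proof -
    have "(\<lambda>n. 1 - real k * inverse (real n)) \<longlonglongrightarrow> 1 - real k * 0"
      by (intro tendsto_diff tendsto_mult tendsto_const lim_inverse_n)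
    moreover have "eventually (\<lambda>n. 1 - real k * inverse (real n) = real (n - k) / real n) sequentially"
      unfolding eventually_sequentially
    proof (intro exI[of _ "Suc k"] allI impI)
      fix n assume "Suc k \<le> n"
      then show "1 - real k * inverse (real n) = real (n - k) / real n"
        by (simp add: of_nat_diff field_simps)
    qed
    ultimately show ?thesis using Lim_transform_eventually by fastforce
  qed
  have "(\<lambda>n. \<Prod>k<m. real (n - k) / real n) \<longlonglongrightarrow> (\<Prod>k<m. 1)"
    by (intro tendsto_prod each)
  then have "(\<lambda>n. \<Prod>k<m. real (n - k) / real n) \<longlonglongrightarrow> 1" by simp
  moreover have "(\<Prod>k<m. real (n - k) / real n) = real (falling_pow n m) / real n ^ m" for n
    unfolding prod_dividef falling_pow_def by simp
  ultimately have "(\<lambda>n. real (falling_pow n m) / real n ^ m) \<longlonglongrightarrow> 1" by simp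
  from tendsto_inverse[OF this] show ?thesis by simp
qed

lemma per_falling_limit:
  assumes "(\<lambda>n. per m n A / real n ^ m) \<longlonglongrightarrow> L"
  shows "(\<lambda>n. per m n A / real (falling_pow n m)) \<longlonglongrightarrow> L"
proof -
  have "(\<lambda>n. (per m n A / real n ^ m) * (real n ^ m / real (falling_pow n m))) \<longlonglongrightarrow> L * 1"
    by (rule tendsto_mult[OF assms falling_ratio])
  moreover have "eventually (\<lambda>n. (per m n A / real n ^ m) * (real n ^ m / real (falling_pow n m))
      = per m n A / real (falling_pow n m)) sequentially"
    unfolding eventually_sequentially
  proof (intro exI[of _ 1] allI impI)
    fix n :: nat assume "1 \<le> n"
    then have "real n ^ m \<noteq> 0" by simp
    then show "(per m n A / real n ^ m) * (real n ^ m / real (falling_pow n m)) = per m n A / real (falling_pow n m)"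
      by simp
  qed
  ultimately show ?thesis using Lim_transform_eventually by fastforce
qed




lemma step_over_Suc:
  fixes a :: "nat \<Rightarrow> real"
  assumes L: "(\<lambda>n. (\<Sum>j<n. a j) / real n) \<longlonglongrightarrow> c"
  shows "(\<lambda>n. a n / real (Suc n)) \<longlonglongrightarrow> 0"
proof -
  have "(\<lambda>n. (\<Sum>j<Suc n. a j) / real (Suc n) - ((\<Sum>j<n. a j) / real n) * (real n / real (Suc n))) \<longlonglongrightarrow> c - c * 1"
    by (intro tendsto_diff tendsto_mult LIMSEQ_Suc[OF L] L LIMSEQ_n_over_Suc_n)
  moreover have "(\<Sum>j<Suc n. a j) / real (Suc n) - ((\<Sum>j<n. a j) / real n) * (real n / real (Suc n)) = a n / real (Suc n)" for n
  proof (cases "n = 0")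
    case True then show ?thesis by simp
  next
    case False
    then have nz: "real n \<noteq> 0" by simp
    define N where "N = real (Suc n)"
    have Nz: "N \<noteq> 0" unfolding N_def by simp
    have "(\<Sum>j<n. a j) / real n * (real n / N) = (\<Sum>j<n. a j) / N" using nz Nz by (simp add: field_simps)
    then have "(\<Sum>j<Suc n. a j) / N - (\<Sum>j<n. a j) / real n * (real n / N) = a n / N"
      by (simp add: diff_divide_distrib[symmetric])
    then show ?thesis unfolding N_def .
  qed
  ultimately show ?thesis by simp
qed

theorem theorem1p1:
  fixes M :: "'a measure" and T :: "'a \<Rightarrow> 'a" and m :: nat and f :: "nat \<Rightarrow> 'a \<Rightarrow> real"
  assumes "prob_space M"
    and "ergodic M T"
    and "m \<ge> 1"
    and "\<And>i. i < m \<Longrightarrow> integrable M (f i)"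
  shows "AE \<omega> in M. (\<lambda>n. per m n (\<lambda>i j. f i ((T ^^ j) \<omega>)) / real (falling_pow n m))
            \<longlonglongrightarrow> (\<Prod>i<m. integral\<^sup>L M (f i))"
proof -
  have B1: "AE x in M. i < m \<longrightarrow> (\<lambda>n. bsum T (f i) n x / real n) \<longlonglongrightarrow> integral\<^sup>L M (f i)" for i
  proof (cases "i < m")
    case True
    from birkhoff[OF assms(1,2) assms(4)[OF True]] show ?thesis by eventually_elim simp
  qed simp
  have B2: "AE x in M. i < m \<longrightarrow> (\<lambda>n. bsum T (\<lambda>x. \<bar>f i x\<bar>) n x / real n) \<longlonglongrightarrow> integral\<^sup>L M (\<lambda>x. \<bar>f i x\<bar>)" for i
  proof (cases "i < m")
    case True
    have "integrable M (\<lambda>x. \<bar>f i x\<bar>)" using assms(4)[OF True] by simp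
    from birkhoff[OF assms(1,2) this] show ?thesis by eventually_elim simp
  qed simp
  have "AE x in M. \<forall>i. (i < m \<longrightarrow> (\<lambda>n. bsum T (f i) n x / real n) \<longlonglongrightarrow> integral\<^sup>L M (f i)) \<and>
      (i < m \<longrightarrow> (\<lambda>n. bsum T (\<lambda>x. \<bar>f i x\<bar>) n x / real n) \<longlonglongrightarrow> integral\<^sup>L M (\<lambda>x. \<bar>f i x\<bar>))"
    unfolding AE_all_countable
  proof
    fix i show "AE x in M. (i < m \<longrightarrow> (\<lambda>n. bsum T (f i) n x / real n) \<longlonglongrightarrow> integral\<^sup>L M (f i)) \<and>
      (i < m \<longrightarrow> (\<lambda>n. bsum T (\<lambda>x. \<bar>f i x\<bar>) n x / real n) \<longlonglongrightarrow> integral\<^sup>L M (\<lambda>x. \<bar>f i x\<bar>))"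
      using B1[of i] B2[of i] by (rule AE_conjI)
  qed
  then show ?thesis
  proof eventually_elim
    case (elim x)
    define A where "A i j = f i ((T ^^ j) x)" for i j
    have S: "(\<lambda>n. (\<Sum>j<n. A i j) / real n) \<longlonglongrightarrow> integral\<^sup>L M (f i)" if "i < m" for i
      using elim that unfolding A_def bsum_def by blast
    have U: "(\<lambda>n. (\<Sum>j<n. \<bar>A i j\<bar>) / real n) \<longlonglongrightarrow> integral\<^sup>L M (\<lambda>x. \<bar>f i x\<bar>)" if "i < m" for i
      using elim that unfolding A_def bsum_def by blast
    have X: "(\<lambda>n. mxa (A i) n / real n) \<longlonglongrightarrow> 0" if "i < m" for i
      by (rule mxa_limit, rule step_over_Suc, rule S[OF that])
    have "(\<lambda>n. per m n A / real n ^ m) \<longlonglongrightarrow> (\<Prod>i<m. integral\<^sup>L M (f i))"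
      by (rule per_limit[OF S U X])
    then have "(\<lambda>n. per m n A / real (falling_pow n m)) \<longlonglongrightarrow> (\<Prod>i<m. integral\<^sup>L M (f i))"
      by (rule per_falling_limit)
    then show ?case unfolding A_def .
  qed
qed


end
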